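(* (i) Let $(A,\succ,\prec)$ be an anti-pre-Novikov algebra and $s\in A\otimes A$ define a factorizable anti-pre-Novikov bialgebra $(A,\succ,\prec,\Delta_{\succ,s},\Delta_{\prec,s})$, and let $\lambda\in k$ be nonzero. Define $\omega(x,y)=-\lambda\langle T_{s+\tau(s)}^{-1}(x),y\rangle$ for $x,y\in A$ and $P=T_s\omega^\sharp$. Then $(A,\succ,\prec,P,\omega)$ is a quadratic Rota–Baxter anti-pre-Novikov algebra of weight $\lambda$. (ii) Conversely, let $(A,\succ,\prec,P,\omega)$ be a quadratic Rota–Baxter anti-pre-Novikov algebra of weight $\lambda\neq0$, and let $s\in A\otimes A$ be defined by $T_s=P(\omega^\sharp)^{-1}$. Then $(A,\succ,\prec,\Delta_{\succ,s},\Delta_{\prec,s})$ is a factorizable anti-pre-Novikov bialgebra.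
   Context: $A$ is finite-dimensional over a field $k$. An anti-pre-Novikov algebra is $(A,\succ,\prec)$ such that with $x\circ y=x\succ y+x\prec y$: $(x\circ y-y\circ x)\succ z=y\succ(x\succ z)-x\succ(y\succ z)$; $x\prec(y\circ z)=(y\succ x)\prec z-(x\prec y)\prec z-y\succ(x\prec z)$; $(x\circ y)\succ z=-(x\succ z)\prec y$; $(x\prec y)\prec z=(x\prec z)\prec y$; $(x\circ y-y\circ x)\prec z=x\succ(y\circ z)-y\succ(x\circ z)$. Notation: $x\odot y=x\succ y+y\prec x$; $L_\ast(x)y=x\ast y$, $R_\ast(x)y=y\ast x$; $L_{\star}=L_{\circ}+R_{\circ}$, $L_{\odot}=L_{\succ}+R_{\prec}$; $\tau$ is the flip; $T_r:A^*\to A$, $\langle T_r(\zeta),\eta\rangle=\langle r,\zeta\otimes\eta\rangle$; $\omega^\sharp:A\to A^*$, $\langle\omega^\sharp(x),y\rangle=\omega(x,y)$. $r\in A\otimes A$ is invariant if $(I\otimes L_{\star}(x)-L_{\succ}(x)\otimes I)r=0$ and $(L_{\circ}(x)\otimes I-I\otimes L_{\odot}(x))r=0$ for all $x$. For $s=\sum_i a_i\otimes b_i$, the anti-pre-Novikov Yang–Baxter equation (APN-YBE) is $\sum_{i,j}a_i\circ a_j\otimes b_i\otimes b_j+\sum_{i,j}a_j\otimes a_i\otimes(b_i\odot b_j)+\sum_{i,j}a_i\otimes(b_i\prec a_j)\otimes b_j=0$. Given $s$, set $\Delta_{\succ,s}(x)=(I\otimes L_{\star}(x)-L_{\succ}(x)\otimes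 I)s$ and $\Delta_{\prec,s}(x)=(L_{\circ}(x)\otimes I-I\otimes L_{\odot}(x))s$. If $s$ solves the APN-YBE and $s+\tau(s)$ is invariant, $(A,\succ,\prec,\Delta_{\succ,s},\Delta_{\prec,s})$ is called a quasi-triangular anti-pre-Novikov bialgebra (the paper shows it is always an anti-pre-Novikov bialgebra); it is called factorizable if in addition $T_{s+\tau(s)}:A^*\to A$ is a linear isomorphism. A Rota–Baxter operator of weight $\lambda$ on $(A,\succ,\prec)$ is a linear $P$ with $P(x)\prec P(y)=P(P(x)\prec y+x\prec P(y)+\lambda x\prec y)$ and $P(x)\succ P(y)=P(P(x)\succ y+x\succ P(y)+\lambda x\succ y)$. A quadratic Rota–Baxter anti-pre-Novikov algebra of weight $\lambda$ is $(A,\succ,\prec,P,\omega)$ with $P$ Rota–Baxter of weight $\lambda$, $\omega$ non-degenerate symmetric with $\omega(x\prec y,z)=-\omega(x,z\circ y)$, $\omega(x\succ y,z)=\omega(x\circ z+z\circ x,y)$, and $\omega(P(x),y)+\omega(x,P(y))+\lambda\omega(x,y)=0$. *)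

theory Defs
  imports Main
begin

text \<open>A finite-dimensional vector space A over a field 'k is represented, after choosing a
basis indexed by the finite type 'n, as the coordinate space 'n \<Rightarrow> 'k.  The dual A* is
represented by coordinates w.r.t. the dual basis (also 'n \<Rightarrow> 'k), A \<otimes> A by
coefficient matrices 'n \<Rightarrow> 'n \<Rightarrow> 'k, and A \<otimes> A \<otimes> A by 'n \<Rightarrow> 'n \<Rightarrow> 'n \<Rightarrow> 'k.\<close>

type_synonym ('n, 'k) vec = "'n \<Rightarrow> 'k"
type_synonym ('n, 'k) bop = "('n,'k) vec \<Rightarrow> ('n,'k) vec \<Rightarrow> ('n,'k) vec"

definition vadd :: "('n,'k::field) vec \<Rightarrow> ('n,'k) vec \<Rightarrow> ('n,'k) vec" where
  "vadd x y = (\<lambda>i. x i + y i)"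
definition vsub :: "('n,'k::field) vec \<Rightarrow> ('n,'k) vec \<Rightarrow> ('n,'k) vec" where
  "vsub x y = (\<lambda>i. x i - y i)"
definition vsmul :: "'k::field \<Rightarrow> ('n,'k) vec \<Rightarrow> ('n,'k) vec" where
  "vsmul c x = (\<lambda>i. c * x i)"
definition vzero :: "('n,'k::field) vec" where
  "vzero = (\<lambda>i. 0)"
definition basis :: "'n \<Rightarrow> ('n,'k::field) vec" where
  "basis i = (\<lambda>j. if j = i then 1 else 0)"

definition is_linear :: "(('n,'k::field) vec \<Rightarrow> ('m,'k) vec) \<Rightarrow> bool" where
  "is_linear f \<longleftrightarrow> (\<forall>x y. f (vadd x y) = vadd (f x) (f y)) \<and> (\<forall>c x. f (vsmul c x) = vsmul c (f x))"

definition bilinear_op :: "('n,'k::field) bop \<Rightarrow> bool" where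
  "bilinear_op m \<longleftrightarrow> (\<forall>y. is_linear (\<lambda>x. m x y)) \<and> (\<forall>x. is_linear (m x))"

definition bilinear_form :: "(('n,'k::field) vec \<Rightarrow> ('n,'k) vec \<Rightarrow> 'k) \<Rightarrow> bool" where
  "bilinear_form w \<longleftrightarrow>
     (\<forall>x y z. w (vadd x y) z = w x z + w y z) \<and> (\<forall>c x z. w (vsmul c x) z = c * w x z) \<and>
     (\<forall>x y z. w z (vadd x y) = w z x + w z y) \<and> (\<forall>c x z. w z (vsmul c x) = c * w z x)"

text \<open>x \<circ> y = x \<succ> y + x \<prec> y ;  here sc = \<succ>, pc = \<prec>\<close>
definition circ :: "('n,'k::field) bop \<Rightarrow> ('n,'k) bop \<Rightarrow> ('n,'k) bop" where
  "circ sc pc x y = vadd (sc x y) (pc x y)"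

definition anti_pre_Novikov :: "('n,'k::field) bop \<Rightarrow> ('n,'k) bop \<Rightarrow> bool" where
  "anti_pre_Novikov sc pc \<longleftrightarrow> bilinear_op sc \<and> bilinear_op pc \<and>
    (\<forall>x y z.
      sc (vsub (circ sc pc x y) (circ sc pc y x)) z = vsub (sc y (sc x z)) (sc x (sc y z)) \<and>
      pc x (circ sc pc y z) = vsub (vsub (pc (sc y x) z) (pc (pc x y) z)) (sc y (pc x z)) \<and>
      sc (circ sc pc x y) z = vsmul (-1) (pc (sc x z) y) \<and>
      pc (pc x y) z = pc (pc x z) y \<and>
      pc (vsub (circ sc pc x y) (circ sc pc y x)) z = vsub (sc x (circ sc pc y z)) (sc y (circ sc pc x z)))"

type_synonym ('n,'k) ten2 = "'n \<Rightarrow> 'n \<Rightarrow> 'k"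
type_synonym ('n,'k) ten3 = "'n \<Rightarrow> 'n \<Rightarrow> 'n \<Rightarrow> 'k"

definition tmap :: "(('n::finite,'k::field) vec \<Rightarrow> ('n,'k) vec) \<Rightarrow> (('n,'k) vec \<Rightarrow> ('n,'k) vec)
    \<Rightarrow> ('n,'k) ten2 \<Rightarrow> ('n,'k) ten2" where
  "tmap f g r = (\<lambda>a b. \<Sum>i\<in>UNIV. \<Sum>j\<in>UNIV. r i j * f (basis i) a * g (basis j) b)"

definition flip :: "('n,'k) ten2 \<Rightarrow> ('n,'k) ten2" where
  "flip r = (\<lambda>a b. r b a)"

definition tadd :: "('n,'k::field) ten2 \<Rightarrow> ('n,'k) ten2 \<Rightarrow> ('n,'k) ten2" where
  "tadd r t = (\<lambda>a b. r a b + t a b)"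

definition Lstar :: "('n,'k::field) bop \<Rightarrow> ('n,'k) bop \<Rightarrow> ('n,'k) vec \<Rightarrow> ('n,'k) vec \<Rightarrow> ('n,'k) vec" where
  "Lstar sc pc x y = vadd (circ sc pc x y) (circ sc pc y x)"

definition odot :: "('n,'k::field) bop \<Rightarrow> ('n,'k) bop \<Rightarrow> ('n,'k) bop" where
  "odot sc pc x y = vadd (sc x y) (pc y x)"

definition invariant :: "('n::finite,'k::field) bop \<Rightarrow> ('n,'k) bop \<Rightarrow> ('n,'k) ten2 \<Rightarrow> bool" where
  "invariant sc pc r \<longleftrightarrow> (\<forall>x.
     tmap id (Lstar sc pc x) r = tmap (sc x) id r \<and>
     tmap (circ sc pc x) id r = tmap id (odot sc pc x) r)"

definition APN_YBE :: "('n::finite,'k::field) bop \<Rightarrow> ('n,'k) bop \<Rightarrow> ('n,'k) ten2 \<Rightarrow> bool" where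
  "APN_YBE sc pc s \<longleftrightarrow> (\<forall>a b c.
     (\<Sum>i\<in>UNIV. \<Sum>j\<in>UNIV. \<Sum>k\<in>UNIV. \<Sum>l\<in>UNIV. s i j * s k l *
        (circ sc pc (basis i) (basis k) a * basis j b * basis l c
         + basis k a * basis i b * odot sc pc (basis j) (basis l) c
         + basis i a * pc (basis j) (basis k) b * basis l c)) = 0)"

text \<open>pairing of A* with A, and T_r : A* \<rightarrow> A with <T_r(z), e> = <r, z \<otimes> e>\<close>
definition pairing :: "('n::finite,'k::field) vec \<Rightarrow> ('n,'k) vec \<Rightarrow> 'k" where
  "pairing z x = (\<Sum>i\<in>UNIV. z i * x i)"

definition Tmap :: "('n::finite,'k::field) ten2 \<Rightarrow> ('n,'k) vec \<Rightarrow> ('n,'k) vec" where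
  "Tmap r z = (\<lambda>j. \<Sum>i\<in>UNIV. r i j * z i)"

definition sharp :: "(('n::finite,'k::field) vec \<Rightarrow> ('n,'k) vec \<Rightarrow> 'k) \<Rightarrow> ('n,'k) vec \<Rightarrow> ('n,'k) vec" where
  "sharp w x = (\<lambda>i. w x (basis i))"

definition quasi_triangular :: "('n::finite,'k::field) bop \<Rightarrow> ('n,'k) bop \<Rightarrow> ('n,'k) ten2 \<Rightarrow> bool" where
  "quasi_triangular sc pc s \<longleftrightarrow> APN_YBE sc pc s \<and> invariant sc pc (tadd s (flip s))"

definition factorizable :: "('n::finite,'k::field) bop \<Rightarrow> ('n,'k) bop \<Rightarrow> ('n,'k) ten2 \<Rightarrow> bool" where
  "factorizable sc pc s \<longleftrightarrow> quasi_triangular sc pc s \<and> bij (Tmap (tadd s (flip s)))"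

definition RB_operator :: "('n,'k::field) bop \<Rightarrow> ('n,'k) bop \<Rightarrow> 'k \<Rightarrow> (('n,'k) vec \<Rightarrow> ('n,'k) vec) \<Rightarrow> bool" where
  "RB_operator sc pc lam P \<longleftrightarrow> is_linear P \<and>
    (\<forall>x y. pc (P x) (P y) = P (vadd (vadd (pc (P x) y) (pc x (P y))) (vsmul lam (pc x y)))) \<and>
    (\<forall>x y. sc (P x) (P y) = P (vadd (vadd (sc (P x) y) (sc x (P y))) (vsmul lam (sc x y))))"

definition quadratic_RB :: "('n,'k::field) bop \<Rightarrow> ('n,'k) bop \<Rightarrow> 'k \<Rightarrow> (('n,'k) vec \<Rightarrow> ('n,'k) vec)
    \<Rightarrow> (('n,'k) vec \<Rightarrow> ('n,'k) vec \<Rightarrow> 'k) \<Rightarrow> bool" where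
  "quadratic_RB sc pc lam P w \<longleftrightarrow> anti_pre_Novikov sc pc \<and> RB_operator sc pc lam P \<and>
    bilinear_form w \<and> (\<forall>x y. w x y = w y x) \<and> (\<forall>x. (\<forall>y. w x y = 0) \<longrightarrow> x = vzero) \<and>
    (\<forall>x y z. w (pc x y) z = - w x (circ sc pc z y)) \<and>
    (\<forall>x y z. w (sc x y) z = w (vadd (circ sc pc x z) (circ sc pc z x)) y) \<and>
    (\<forall>x y. w (P x) y + w x (P y) + lam * w x y = 0)"

end

theory Submission
  imports Defs "HOL-Library.Function_Algebras" "HOL.Vector_Spaces"
begin

definition lin1 :: "(('n,'k::field) vec \<Rightarrow> 'k) \<Rightarrow> bool" where
  "lin1 g \<longleftrightarrow> (\<forall>x y. g (vadd x y) = g x + g y) \<and> (\<forall>c x. g (vsmul c x) = c * g x)"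

lemma vec_expand: "x = (\<lambda>j. \<Sum>i\<in>(UNIV::'n::finite set). x i * (basis i j :: 'k::field))"
proof
  fix j
  have "(\<Sum>i\<in>(UNIV::'n set). x i * (basis i j :: 'k)) = (\<Sum>i\<in>UNIV. if i = j then x j else 0)"
    by (rule sum.cong) (auto simp: basis_def)
  then show "x j = (\<Sum>i\<in>UNIV. x i * basis i j)" by simp
qed

lemma lin1_expand:
  fixes g :: "('n::finite,'k::field) vec \<Rightarrow> 'k"
  assumes "lin1 g" shows "g x = (\<Sum>i\<in>UNIV. x i * g (basis i))"
proof -
  have *: "g (\<lambda>j. \<Sum>i\<in>S. x i * basis i j) = (\<Sum>i\<in>S. x i * g (basis i))" if "finite S" for S
    using that
  proof induct
    case empty
    have "g (\<lambda>j. \<Sum>i\<in>{}. x i * basis i j) = g (vsmul (0::'k) (\<lambda>j. 0))" by (simp add: vsmul_def)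
    also have "\<dots> = 0" using assms by (simp add: lin1_def)
    finally show ?case by simp
  next
    case (insert a F)
    have "(\<lambda>j. \<Sum>i\<in>insert a F. x i * basis i j) = vadd (vsmul (x a) (basis a)) (\<lambda>j. \<Sum>i\<in>F. x i * basis i j)"
      using insert by (simp add: vadd_def vsmul_def)
    then show ?case using assms insert by (simp add: lin1_def)
  qed
  show ?thesis using *[of UNIV] vec_expand[of x] by simp
qed

lemma if01_mult[simp]: "x * (if P then 1 else 0) = (if P then x else 0)"
  "(if P then x else 0) * y = (if P then x * y else 0)" for x y :: "'a::semiring_1"
  by simp_all

lemma sum_if_out[simp]: "(\<Sum>k\<in>S. if P then f k else 0) = (if P then (\<Sum>k\<in>S. f k) else 0)"
  by simp

lemma basis_apply: "basis i a = (if a = i then 1 else 0)"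
  by (simp add: basis_def)

lemma bop_rules:
  assumes "bilinear_op m"
  shows "m (vadd x y) z = vadd (m x z) (m y z)" "m z (vadd x y) = vadd (m z x) (m z y)"
        "m (vsmul c x) z = vsmul c (m x z)" "m z (vsmul c x) = vsmul c (m z x)"
  using assms by (auto simp: bilinear_op_def is_linear_def)

lemma lin_rules:
  assumes "is_linear f"
  shows "f (vadd x y) = vadd (f x) (f y)" "f (vsmul c x) = vsmul c (f x)"
  using assms by (auto simp: is_linear_def)

lemma bf_rules:
  assumes "bilinear_form w"
  shows "w (vadd x y) z = w x z + w y z" "w (vsmul c x) z = c * w x z"
        "w z (vadd x y) = w z x + w z y" "w z (vsmul c x) = c * w z x"
  using assms by (auto simp: bilinear_form_def)

lemma vsub_alt: "vsub x y = vadd x (vsmul (-1) y)"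
  by (simp add: vsub_def vadd_def vsmul_def)

lemma lin1_component: "is_linear f \<Longrightarrow> lin1 (\<lambda>x. f x j)"
  by (simp add: lin1_def is_linear_def vadd_def vsmul_def)

lemma linear_expand:
  fixes f :: "('n::finite,'k::field) vec \<Rightarrow> ('n,'k) vec"
  assumes "is_linear f" shows "f x j = (\<Sum>i\<in>UNIV. x i * f (basis i) j)"
  using lin1_expand[OF lin1_component[OF assms]] .

lemma bilinear_expand:
  fixes m :: "('n::finite,'k::field) bop"
  assumes "bilinear_op m" shows "m x y j = (\<Sum>i\<in>UNIV. \<Sum>k\<in>UNIV. x i * y k * m (basis i) (basis k) j)"
proof -
  have l1: "is_linear (\<lambda>x. m x y)" for y using assms by (simp add: bilinear_op_def)
  have l2: "is_linear (m x)" for x using assms by (simp add: bilinear_op_def)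
  have "m x y j = (\<Sum>i\<in>UNIV. x i * m (basis i) y j)" using linear_expand[OF l1] .
  also have "\<dots> = (\<Sum>i\<in>UNIV. x i * (\<Sum>k\<in>UNIV. y k * m (basis i) (basis k) j))"
    using linear_expand[OF l2] by metis
  finally show ?thesis by (simp add: sum_distrib_left mult.assoc)
qed

lemma Tmap_vadd[simp]: "Tmap r (vadd x y) = vadd (Tmap r x) (Tmap r y)"
  by (simp add: Tmap_def vadd_def sum.distrib algebra_simps)
lemma Tmap_vsmul[simp]: "Tmap r (vsmul c x) = vsmul c (Tmap r x)"
  by (simp add: Tmap_def vsmul_def sum_distrib_left algebra_simps)
lemma Tmap_basis: "Tmap r (basis a) = (\<lambda>j. r a j)"
  by (simp add: Tmap_def basis_apply)
lemma Tmap_tadd: "Tmap (tadd r t) z = vadd (Tmap r z) (Tmap t z)"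
  by (simp add: Tmap_def tadd_def vadd_def sum.distrib algebra_simps)
lemma Tmap_linear: "is_linear (Tmap r)"
  by (simp add: is_linear_def)

lemma pairing_rules[simp]:
  "pairing (vadd x y) z = pairing x z + pairing y z"
  "pairing z (vadd x y) = pairing z x + pairing z y"
  "pairing (vsmul c x) z = c * pairing x z"
  "pairing z (vsmul c x) = c * pairing z x"
  by (simp_all add: pairing_def vadd_def vsmul_def sum.distrib sum_distrib_left algebra_simps)

lemma pairing_basis[simp]: "pairing (basis a) v = v a" "pairing v (basis a) = v a"
  by (simp_all add: pairing_def basis_apply)

lemma pairing_comm: "pairing x y = pairing y x"
  by (simp add: pairing_def mult.commute)

lemma flip_sym: "flip (tadd s (flip s)) = tadd s (flip s)"
  by (simp add: flip_def tadd_def add.commute fun_eq_iff)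

lemma tmap_id_left:
  assumes "is_linear g" shows "tmap id g r a b = g (Tmap r (basis a)) b"
  by (simp add: tmap_def Tmap_basis basis_apply linear_expand[OF assms, of "r a"])

lemma tmap_id_right:
  assumes "is_linear f" shows "tmap f id r a b = f (Tmap (flip r) (basis b)) a"
  apply (simp add: tmap_def Tmap_basis basis_apply flip_def)
  apply (simp add: linear_expand[OF assms, of "\<lambda>j. r j b"]) done

lemma circ_bilinear: "bilinear_op sc \<Longrightarrow> bilinear_op pc \<Longrightarrow> bilinear_op (circ sc pc)"
  by (simp add: bilinear_op_def is_linear_def circ_def vadd_def vsmul_def algebra_simps fun_eq_iff)

lemma odot_bilinear: "bilinear_op sc \<Longrightarrow> bilinear_op pc \<Longrightarrow> bilinear_op (odot sc pc)"
  by (simp add: bilinear_op_def is_linear_def odot_def vadd_def vsmul_def algebra_simps fun_eq_iff)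

lemma if0_mult: "x * (if P then y else 0) = (if P then x * y else 0)"
  "(if P then y else 0) * x = (if P then y * x else 0)" for x y :: "'a::semiring_0"
  by simp_all

definition Phi :: "('n::finite,'k::field) bop \<Rightarrow> ('n,'k) bop \<Rightarrow> ('n,'k) ten2 \<Rightarrow> ('n,'k) vec \<Rightarrow> ('n,'k) vec \<Rightarrow> ('n,'k) vec \<Rightarrow> 'k" where
  "Phi sc pc s z e t = pairing z (circ sc pc (Tmap (flip s) e) (Tmap (flip s) t))
     + pairing t (odot sc pc (Tmap s e) (Tmap s z)) + pairing e (pc (Tmap s z) (Tmap (flip s) t))"

lemma APN_coef:
  assumes bsc: "bilinear_op sc" and bpc: "bilinear_op pc"
  shows "APN_YBE sc pc s \<longleftrightarrow> (\<forall>a b c. Phi sc pc s (basis a) (basis b) (basis c) = 0)"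
proof -
  have "(\<Sum>i\<in>UNIV. \<Sum>j\<in>UNIV. \<Sum>k\<in>UNIV. \<Sum>l\<in>UNIV. s i j * s k l *
        (circ sc pc (basis i) (basis k) a * basis j b * basis l c
         + basis k a * basis i b * odot sc pc (basis j) (basis l) c
         + basis i a * pc (basis j) (basis k) b * basis l c)) = Phi sc pc s (basis a) (basis b) (basis c)"
    for a b c
  proof -
    have h1: "circ sc pc (\<lambda>j. s j b) (\<lambda>j. s j c) a = (\<Sum>i\<in>UNIV. \<Sum>k\<in>UNIV. s i b * s k c * circ sc pc (basis i) (basis k) a)"
      by (rule bilinear_expand[OF circ_bilinear[OF bsc bpc]])
    have h2: "odot sc pc (\<lambda>j. s b j) (\<lambda>j. s a j) c = (\<Sum>i\<in>UNIV. \<Sum>k\<in>UNIV. s b i * s a k * odot sc pc (basis i) (basis k) c)"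
      by (rule bilinear_expand[OF odot_bilinear[OF bsc bpc]])
    have h3: "pc (\<lambda>j. s a j) (\<lambda>j. s j c) b = (\<Sum>i\<in>UNIV. \<Sum>k\<in>UNIV. s a i * s k c * pc (basis i) (basis k) b)"
      by (rule bilinear_expand[OF bpc])
    have ph: "Phi sc pc s (basis a) (basis b) (basis c) = circ sc pc (\<lambda>j. s j b) (\<lambda>j. s j c) a
       + odot sc pc (\<lambda>j. s b j) (\<lambda>j. s a j) c + pc (\<lambda>j. s a j) (\<lambda>j. s j c) b"
      by (simp add: Phi_def Tmap_basis flip_def)
    show ?thesis unfolding ph h1 h2 h3
      by (simp add: basis_apply ring_distribs sum.distrib if0_mult)
  qed
  then show ?thesis by (simp add: APN_YBE_def)
qed

lemma Phi_lin:
  assumes "bilinear_op sc" "bilinear_op pc"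
  shows "lin1 (\<lambda>z. Phi sc pc s z e t)" "lin1 (\<lambda>e. Phi sc pc s z e t)" "lin1 (Phi sc pc s z e)"
  using bop_rules[OF assms(1)] bop_rules[OF assms(2)] bop_rules[OF circ_bilinear[OF assms]]
    bop_rules[OF odot_bilinear[OF assms]]
  by (simp_all add: lin1_def Phi_def algebra_simps)

lemma tri_ext:
  fixes F :: "('n::finite,'k::field) vec \<Rightarrow> ('n,'k) vec \<Rightarrow> ('n,'k) vec \<Rightarrow> 'k"
  assumes l1: "\<And>e t. lin1 (\<lambda>z. F z e t)" and l2: "\<And>z t. lin1 (\<lambda>e. F z e t)"
    and l3: "\<And>z e. lin1 (F z e)" and b: "\<And>a b c. F (basis a) (basis b) (basis c) = 0"
  shows "F z e t = 0"
proof -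
  have 1: "F (basis a) (basis b) t = 0" for a b
    using lin1_expand[OF l3[of "basis a" "basis b"], of t] b by simp
  have 2: "F (basis a) e t = 0" for a
    using lin1_expand[OF l2[of "basis a" t], of e] 1 by simp
  show ?thesis
    using lin1_expand[OF l1[of e t], of z] 2 by simp
qed

lemma bi_ext:
  fixes F :: "('n::finite,'k::field) vec \<Rightarrow> ('n,'k) vec \<Rightarrow> 'k"
  assumes l1: "\<And>e. lin1 (\<lambda>z. F z e)" and l2: "\<And>z. lin1 (F z)"
    and b: "\<And>a b. F (basis a) (basis b) = 0"
  shows "F z e = 0"
proof -
  have 1: "F (basis a) e = 0" for a
    using lin1_expand[OF l2[of "basis a"], of e] b by simp
  show ?thesis
    using lin1_expand[OF l1[of e], of z] 1 by simp
qed

lemma pairing_Tmap_sym: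
  "pairing e (Tmap s z) + pairing z (Tmap s e) = pairing e (Tmap (tadd s (flip s)) z)"
proof -
  have 1: "pairing z (Tmap s e) = (\<Sum>i\<in>UNIV. \<Sum>j\<in>UNIV. z i * s j i * e j)"
    by (simp add: pairing_def Tmap_def sum_distrib_left mult.assoc)
  also have "\<dots> = (\<Sum>j\<in>UNIV. \<Sum>i\<in>UNIV. z i * s j i * e j)"
    by (rule sum.swap)
  finally have 1: "pairing z (Tmap s e) = (\<Sum>j\<in>UNIV. \<Sum>i\<in>UNIV. e j * (s j i * z i))"
    by (simp add: ac_simps)
  have 2: "pairing e (Tmap s z) = (\<Sum>j\<in>UNIV. \<Sum>i\<in>UNIV. e j * (s i j * z i))"
    by (simp add: pairing_def Tmap_def sum_distrib_left)
  have 3: "pairing e (Tmap (tadd s (flip s)) z) = (\<Sum>j\<in>UNIV. \<Sum>i\<in>UNIV. e j * (s i j * z i) + e j * (s j i * z i))"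
    by (simp add: pairing_def Tmap_def sum_distrib_left tadd_def flip_def ring_distribs)
  show ?thesis unfolding 1 2 3 by (simp add: sum.distrib)
qed

lemma vsub_zero: "vsub a b = vzero \<Longrightarrow> a = b"
  by (simp add: vsub_def vzero_def fun_eq_iff)

lemma Tmap_flip_apply: "Tmap (flip s) z j = pairing z (Tmap s (basis j))"
  by (simp add: Tmap_def flip_def pairing_def Tmap_basis mult.commute basis_apply)

locale setting =
  fixes sc pc :: "('n::finite,'k::field) bop" and w :: "('n,'k) vec \<Rightarrow> ('n,'k) vec \<Rightarrow> 'k"
    and P :: "('n,'k) vec \<Rightarrow> ('n,'k) vec" and s :: "('n,'k) ten2" and lam :: 'k
  assumes bsc: "bilinear_op sc" and bpc: "bilinear_op pc"
    and bw: "bilinear_form w" and wsym: "\<And>x y. w x y = w y x"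
    and Wsurj: "surj (sharp w)" and linP: "is_linear P"
    and TsW: "\<And>x. Tmap s (sharp w x) = P x"
    and compat: "\<And>x y. w (P x) y + w x (P y) + lam * w x y = 0"
    and lam0: "lam \<noteq> 0"
begin

definition Pd where "Pd x = vadd (vsmul (-1) (P x)) (vsmul (-lam) x)"

lemma pW: "pairing (sharp w x) v = w x v"
proof -
  have "lin1 (w x)" using bw by (simp add: lin1_def bilinear_form_def)
  from lin1_expand[OF this, of v] show ?thesis
    by (simp add: pairing_def sharp_def mult.commute)
qed

lemma preim: obtains u where "sharp w u = basis j"
  using Wsurj by (metis surjD)

lemma nondeg: assumes "\<And>y. w y d = 0" shows "d = vzero"
proof
  fix j
  obtain u where u: "sharp w u = basis j" using preim by blast
  have "d j = pairing (sharp w u) d" using u by simp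
  also have "\<dots> = 0" using pW assms by simp
  finally show "d j = vzero j" by (simp add: vzero_def)
qed

lemma compatP: "w (P u) v = - w u (P v) - lam * w u v"
  using compat[of u v] by (simp add: algebra_simps eq_neg_iff_add_eq_0)

lemma TfW: "Tmap (flip s) (sharp w x) = Pd x"
proof
  fix j
  obtain u where u: "sharp w u = basis j" using preim by blast
  have "Tmap (flip s) (sharp w x) j = w x (P u)"
    using Tmap_flip_apply[of s "sharp w x" j] u[symmetric] by (simp add: TsW pW)
  also have "\<dots> = w u (Pd x)"
    using compat[of u x] bf_rules[OF bw] by (simp add: Pd_def wsym[of x] algebra_simps eq_neg_iff_add_eq_0)
  also have "\<dots> = Pd x j" using pW[of u "Pd x"] u by simp
  finally show "Tmap (flip s) (sharp w x) j = Pd x j" .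
qed

lemma TrW: "Tmap (tadd s (flip s)) (sharp w x) = vsmul (-lam) x"
  by (simp add: Tmap_tadd TsW TfW Pd_def vadd_def vsmul_def fun_eq_iff)

end

lemma lin_maps:
  assumes "bilinear_op sc" "bilinear_op pc"
  shows "is_linear (Lstar sc pc x)" "is_linear (circ sc pc x)" "is_linear (odot sc pc x)" "is_linear (sc x)"
  using assms circ_bilinear[OF assms] odot_bilinear[OF assms]
  by (auto simp: bilinear_op_def is_linear_def Lstar_def vadd_def vsmul_def algebra_simps fun_eq_iff)

context setting begin

abbreviation "condA \<equiv> (\<forall>x y z. w (pc x y) z = - w x (circ sc pc z y))"
abbreviation "condB \<equiv> (\<forall>x y z. w (sc x y) z = w (vadd (circ sc pc x z) (circ sc pc z x)) y)"

lemmas rules = bop_rules[OF bsc] bop_rules[OF bpc] bop_rules[OF circ_bilinear[OF bsc bpc]]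
    bop_rules[OF odot_bilinear[OF bsc bpc]] bf_rules[OF bw] lin_rules[OF linP] vsub_alt

lemma inv_from:
  assumes A: condA and B: condB
  shows "invariant sc pc (tadd s (flip s))"
  unfolding invariant_def
proof (intro allI conjI ext)
  fix x a b
  obtain u where u: "sharp w u = basis a" using preim by blast
  obtain v where v: "sharp w v = basis b" using preim by blast
  note L = lin_maps[OF bsc bpc]
  have "tmap id (Lstar sc pc x) (tadd s (flip s)) a b = - lam * w v (Lstar sc pc x u)"
    unfolding tmap_id_left[OF L(1)] u[symmetric] TrW
    using pW[of v "Lstar sc pc x u"] v by (simp add: lin_rules[OF L(1)]) (simp add: vsmul_def)
  also have "\<dots> = - lam * w u (sc x v)"
    using B wsym by (simp add: Lstar_def)
  also have "\<dots> = tmap (sc x) id (tadd s (flip s)) a b"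
    unfolding tmap_id_right[OF L(4)] flip_sym v[symmetric] TrW
    using pW[of u "sc x v"] u by (simp add: lin_rules[OF L(4)]) (simp add: vsmul_def)
  finally show "tmap id (Lstar sc pc x) (tadd s (flip s)) a b = tmap (sc x) id (tadd s (flip s)) a b" .
next
  fix x a b
  obtain u where u: "sharp w u = basis a" using preim by blast
  obtain v where v: "sharp w v = basis b" using preim by blast
  note L = lin_maps[OF bsc bpc]
  have "tmap (circ sc pc x) id (tadd s (flip s)) a b = - lam * w u (circ sc pc x v)"
    unfolding tmap_id_right[OF L(2)] flip_sym v[symmetric] TrW
    using pW[of u "circ sc pc x v"] u by (simp add: lin_rules[OF L(2)]) (simp add: vsmul_def)
  also have "w u (circ sc pc x v) = w v (odot sc pc x u)"
  proof -
    have "w v (odot sc pc x u) = w (sc x u) v + w (pc u x) v"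
      by (simp add: odot_def rules wsym[of v])
    also have "\<dots> = w (circ sc pc x v) u + w (circ sc pc v x) u - w u (circ sc pc v x)"
      using A B by (simp add: rules)
    finally show ?thesis by (simp add: wsym[of u])
  qed
  also have "- lam * w v (odot sc pc x u) = tmap id (odot sc pc x) (tadd s (flip s)) a b"
    unfolding tmap_id_left[OF L(3)] u[symmetric] TrW
    using pW[of v "odot sc pc x u"] v by (simp add: lin_rules[OF L(3)]) (simp add: vsmul_def)
  finally show "tmap (circ sc pc x) id (tadd s (flip s)) a b = tmap id (odot sc pc x) (tadd s (flip s)) a b" .
qed

end

context setting begin

lemma inv_to:
  assumes inv: "invariant sc pc (tadd s (flip s))"
  shows condB condA
proof -
  note L = lin_maps[OF bsc bpc]
  define Tr where "Tr = Tmap (tadd s (flip s))"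
  have TrW': "Tr (sharp w u) = vsmul (-lam) u" for u unfolding Tr_def by (rule TrW)
  have key1: "w v (Lstar sc pc x u) = w u (sc x v)" for x u v
  proof -
    have h: "Lstar sc pc x (Tr (basis a)) b = sc x (Tr (basis b)) a" for a b
      using fun_cong[OF fun_cong[OF conjunct1[OF inv[unfolded invariant_def, rule_format, of x]]], of a b]
      unfolding tmap_id_left[OF L(1)] tmap_id_right[OF L(4)] flip_sym Tr_def .
    define F where "F = (\<lambda>z e. pairing e (Lstar sc pc x (Tr z)) - pairing z (sc x (Tr e)))"
    have "F z e = 0" for z e
      apply (rule bi_ext[where F = F])
        apply (simp_all add: F_def lin1_def Tr_def lin_rules[OF L(1)] lin_rules[OF L(4)] algebra_simps h[unfolded Tr_def])
      done
    from this[of "sharp w u" "sharp w v"] have "- lam * w v (Lstar sc pc x u) + lam * w u (sc x v) = 0"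
      unfolding F_def TrW' by (simp add: lin_rules[OF L(1)] lin_rules[OF L(4)] pW)
    then show ?thesis using lam0 by (simp add: algebra_simps)
  qed
  show B: condB
  proof (intro allI)
    fix x y z
    show "w (sc x y) z = w (vadd (circ sc pc x z) (circ sc pc z x)) y"
      using key1[of y x z] wsym by (simp add: Lstar_def)
  qed
  have key2: "w u (circ sc pc x v) = w v (odot sc pc x u)" for x u v
  proof -
    have h: "circ sc pc x (Tr (basis b)) a = odot sc pc x (Tr (basis a)) b" for a b
      using fun_cong[OF fun_cong[OF conjunct2[OF inv[unfolded invariant_def, rule_format, of x]]], of a b]
      unfolding tmap_id_left[OF L(3)] tmap_id_right[OF L(2)] flip_sym Tr_def .
    define F where "F = (\<lambda>z e. pairing z (circ sc pc x (Tr e)) - pairing e (odot sc pc x (Tr z)))"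
    have "F z e = 0" for z e
      apply (rule bi_ext[where F = F])
        apply (simp_all add: F_def lin1_def Tr_def lin_rules[OF L(2)] lin_rules[OF L(3)] algebra_simps h[unfolded Tr_def])
      done
    from this[of "sharp w u" "sharp w v"] have "- lam * w u (circ sc pc x v) + lam * w v (odot sc pc x u) = 0"
      unfolding F_def TrW' by (simp add: lin_rules[OF L(2)] lin_rules[OF L(3)] pW)
    then show ?thesis using lam0 by (simp add: algebra_simps)
  qed
  show condA
  proof (intro allI)
    fix u y v
    have "w u (circ sc pc y v) = w (sc y u) v + w (pc u y) v"
      using key2[of u y v] by (simp add: odot_def rules wsym[of v])
    also have "\<dots> = w (circ sc pc y v) u + w (circ sc pc v y) u + w (pc u y) v"
      using B by (simp add: rules)
    finally show "w (pc u y) v = - w u (circ sc pc v y)"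
      by (simp add: wsym[of u] algebra_simps eq_neg_iff_add_eq_0)
  qed
qed

end

context setting begin

definition Dc where "Dc y z = vsub (circ sc pc (P y) (P z)) (P (vadd (vadd (circ sc pc (P y) z) (circ sc pc y (P z))) (vsmul lam (circ sc pc y z))))"
definition Dpc where "Dpc y z = vsub (pc (P y) (P z)) (P (vadd (vadd (pc (P y) z) (pc y (P z))) (vsmul lam (pc y z))))"
definition Dsc where "Dsc y z = vsub (sc (P y) (P z)) (P (vadd (vadd (sc (P y) z) (sc y (P z))) (vsmul lam (sc y z))))"

lemma PhiW: "Phi sc pc s (sharp w x) (sharp w y) (sharp w z) =
   w x (circ sc pc (Pd y) (Pd z)) + w z (odot sc pc (P y) (P x)) + w y (pc (P x) (Pd z))"
  by (simp add: Phi_def TsW TfW pW)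

lemma G_eq:
  assumes A: condA and B: condB
  shows "Phi sc pc s (sharp w x) (sharp w y) (sharp w z) = w x (Dc y z)"
proof -
  have "w z (odot sc pc (P y) (P x)) = w (sc (P y) (P x)) z + w (pc (P x) (P y)) z"
    by (simp add: odot_def rules wsym[of z])
  also have "\<dots> = w (circ sc pc (P y) z) (P x)"
    using A B by (simp add: rules wsym[of "circ sc pc z (P y)"])
  finally have e1: "w z (odot sc pc (P y) (P x)) = w (P x) (circ sc pc (P y) z)"
    by (simp add: wsym[of _ "P x"])
  have e2: "w y (pc (P x) (Pd z)) = - w (P x) (circ sc pc y (Pd z))"
    using A wsym[of y] by simp
  show ?thesis unfolding PhiW e1 e2
    by (simp add: Dc_def Pd_def rules compatP algebra_simps)
qed

lemma Dpc_eq: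
  assumes A: condA
  shows "w (Dpc a b) c = - w a (Dc c b)"
  using A by (simp add: Dpc_def Dc_def rules compatP algebra_simps)

lemma Dc_split: "Dc y z = vadd (Dsc y z) (Dpc y z)"
  by (simp add: Dc_def Dsc_def Dpc_def circ_def rules) (simp add: vadd_def vsmul_def fun_eq_iff algebra_simps)

end

lemma sum_fun_apply: "(\<Sum>v\<in>S. f v) i = (\<Sum>v\<in>S. f v i)"
  by (induct S rule: infinite_finite_induct) (auto simp: zero_fun_def plus_fun_def)

lemma basis_inj: "inj (basis :: 'n \<Rightarrow> ('n,'k::field) vec)"
proof (rule injI)
  fix i j :: 'n assume "(basis i :: ('n,'k) vec) = basis j"
  then have "(basis i :: ('n,'k) vec) i = basis j i" by simp
  then show "i = j" by (simp add: basis_def split: if_splits)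
qed

lemma sum_basis_scale:
  fixes u :: "('n::finite \<Rightarrow> 'k::field) \<Rightarrow> 'k"
  shows "(\<Sum>v\<in>range (basis :: 'n \<Rightarrow> 'n \<Rightarrow> 'k). (\<lambda>i. u v * v i)) = (\<lambda>j. u (basis j))"
proof
  fix j :: 'n
  have "(\<Sum>v\<in>range (basis :: 'n \<Rightarrow> 'n \<Rightarrow> 'k). (\<lambda>i. u v * v i)) j = (\<Sum>v\<in>range (basis :: 'n \<Rightarrow> 'n \<Rightarrow> 'k). u v * v j)"
    by (simp add: sum_fun_apply)
  also have "\<dots> = (\<Sum>i\<in>(UNIV::'n set). u (basis i) * basis i j)"
    by (simp add: sum.reindex[OF basis_inj])
  also have "\<dots> = u (basis j)" by (simp add: basis_apply if0_mult)
  finally show "(\<Sum>v\<in>range (basis :: 'n \<Rightarrow> 'n \<Rightarrow> 'k). (\<lambda>i. u v * v i)) j = u (basis j)" .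
qed

interpretation fv: vector_space "(\<lambda>c (x::'n \<Rightarrow> 'k::field). \<lambda>i. c * x i)"
  by unfold_locales (simp_all add: fun_eq_iff algebra_simps)

interpretation fvs: finite_dimensional_vector_space "(\<lambda>c (x::'n::finite \<Rightarrow> 'k::field). \<lambda>i. c * x i)" "range (basis :: 'n \<Rightarrow> 'n \<Rightarrow> 'k)"
proof unfold_locales
  show "finite (range (basis :: 'n \<Rightarrow> 'n \<Rightarrow> 'k))" by simp
next
  show "\<not> fv.dependent (range (basis :: 'n \<Rightarrow> 'n \<Rightarrow> 'k))"
  proof
    assume "fv.dependent (range (basis :: 'n \<Rightarrow> 'n \<Rightarrow> 'k))"
    then obtain u where u: "\<exists>v\<in>range (basis :: 'n \<Rightarrow> 'n \<Rightarrow> 'k). u v \<noteq> 0"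
      "(\<Sum>v\<in>range (basis :: 'n \<Rightarrow> 'n \<Rightarrow> 'k). (\<lambda>i. u v * v i)) = 0"
      by (auto simp: fv.dependent_finite)
    from u(2) have "(\<lambda>j. u (basis j)) = (0 :: 'n \<Rightarrow> 'k)" by (simp add: sum_basis_scale)
    then have "u (basis j) = 0" for j by (simp add: fun_eq_iff)
    with u(1) show False by auto
  qed
next
  show "fv.span (range (basis :: 'n \<Rightarrow> 'n \<Rightarrow> 'k)) = UNIV"
  proof -
    have "x \<in> fv.span (range (basis :: 'n \<Rightarrow> 'n \<Rightarrow> 'k))" for x :: "'n \<Rightarrow> 'k"
    proof -
      define u where "u = (\<lambda>v::'n \<Rightarrow> 'k. x (inv basis v))"
      have "(\<lambda>j. u (basis j)) = x" by (simp add: u_def inv_f_f[OF basis_inj])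
      then have "(\<Sum>v\<in>range (basis :: 'n \<Rightarrow> 'n \<Rightarrow> 'k). (\<lambda>i. u v * v i)) = x" by (simp add: sum_basis_scale)
      then show ?thesis by (auto simp: fv.span_finite)
    qed
    then show ?thesis by auto
  qed
qed

lemma inj_surj:
  fixes f :: "('n::finite,'k::field) vec \<Rightarrow> ('n,'k) vec"
  assumes lf: "is_linear f" and fi: "inj f"
  shows "surj f"
proof -
  have "Vector_Spaces.linear (\<lambda>c (x::'n \<Rightarrow> 'k). \<lambda>i. c * x i) (\<lambda>c (x::'n \<Rightarrow> 'k). \<lambda>i. c * x i) f"
  proof unfold_locales
    fix x y :: "'n \<Rightarrow> 'k" and c :: 'k
    show "f (x + y) = f x + f y" using lin_rules(1)[OF lf, of x y] by (simp add: vadd_def plus_fun_def)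
    show "f (\<lambda>i. c * x i) = (\<lambda>i. c * f x i)" using lin_rules(2)[OF lf, of c x] by (simp add: vsmul_def)
  qed
  then show ?thesis using fvs.linear_inj_imp_surj fi by blast
qed

lemma pW_gen: assumes bw: "bilinear_form w" shows "pairing (sharp w x) v = w x v"
proof -
  have "lin1 (w x)" using bw by (simp add: lin1_def bilinear_form_def)
  from lin1_expand[OF this, of v] show ?thesis
    by (simp add: pairing_def sharp_def mult.commute)
qed

lemma vzero_smul: "vzero = vsmul 0 vzero" by (simp add: vzero_def vsmul_def)

lemma bf_zero: assumes "bilinear_form w" shows "w a vzero = 0" "w vzero a = 0"
proof -
  have "w a vzero = w a (vsmul 0 vzero)" "w vzero a = w (vsmul 0 vzero) a" by (simp_all only: vzero_smul[symmetric])
  then show "w a vzero = 0" "w vzero a = 0" by (simp_all add: bf_rules[OF assms])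
qed

lemma linear_inv:
  assumes lf: "is_linear f" and b: "bij f" shows "is_linear (inv f)"
proof -
  have fi: "f (inv f y) = y" for y using b by (simp add: bij_is_surj surj_f_inv_f)
  have ifi: "inv f (f y) = y" for y using b by (simp add: bij_is_inj)
  show ?thesis unfolding is_linear_def
  proof (intro conjI allI)
    fix x y show "inv f (vadd x y) = vadd (inv f x) (inv f y)"
      using ifi[of "vadd (inv f x) (inv f y)"] by (simp add: lin_rules[OF lf] fi)
  next
    fix c x show "inv f (vsmul c x) = vsmul c (inv f x)"
      using ifi[of "vsmul c (inv f x)"] by (simp add: lin_rules[OF lf] fi)
  qed
qed

lemma sharp_linear: assumes "bilinear_form w" shows "is_linear (sharp w)"
  unfolding is_linear_def sharp_def by (simp add: bf_rules[OF assms]) (simp add: vadd_def vsmul_def fun_eq_iff)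

lemma vsub_self: "vsub a a = vzero" by (simp add: vsub_def vzero_def)

lemma vadd_zero: "vadd a vzero = a" "vadd vzero a = a" by (simp_all add: vadd_def vzero_def)

lemma (in setting) RB_iff: "RB_operator sc pc lam P \<longleftrightarrow>
   (\<forall>x y. Dpc x y = vzero) \<and> (\<forall>x y. Dsc x y = vzero)"
proof
  assume "RB_operator sc pc lam P"
  then show "(\<forall>x y. Dpc x y = vzero) \<and> (\<forall>x y. Dsc x y = vzero)"
    unfolding RB_operator_def Dpc_def Dsc_def by (simp add: vsub_self)
next
  assume H: "(\<forall>x y. Dpc x y = vzero) \<and> (\<forall>x y. Dsc x y = vzero)"
  have 1: "pc (P x) (P y) = P (vadd (vadd (pc (P x) y) (pc x (P y))) (vsmul lam (pc x y)))" for x y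
    using H vsub_zero unfolding Dpc_def by blast
  have 2: "sc (P x) (P y) = P (vadd (vadd (sc (P x) y) (sc x (P y))) (vsmul lam (sc x y)))" for x y
    using H vsub_zero unfolding Dsc_def by blast
  show "RB_operator sc pc lam P" unfolding RB_operator_def using linP 1 2 by blast
qed

lemma linear_comp: "is_linear f \<Longrightarrow> is_linear g \<Longrightarrow> is_linear (f \<circ> g)"
  by (simp add: is_linear_def)

lemma vsmul_inj: "c \<noteq> 0 \<Longrightarrow> vsmul c x = vsmul c y \<Longrightarrow> x = y"
  by (simp add: vsmul_def fun_eq_iff)

lemma vsmul_cancel: "(c::'k::field) \<noteq> 0 \<Longrightarrow> vsmul (-c) (vsmul (- (1/c)) x) = x"
  by (simp add: vsmul_def fun_eq_iff)

theorem mainTheorem17: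
  fixes sc pc :: "('n::finite, 'k::field) bop"
  shows
   "(\<forall>(s :: ('n,'k) ten2) (lam :: 'k).
       anti_pre_Novikov sc pc \<and> factorizable sc pc s \<and> lam \<noteq> 0 \<longrightarrow>
       (let w = (\<lambda>x y. - lam * pairing (inv (Tmap (tadd s (flip s))) x) y)
        in quadratic_RB sc pc lam (Tmap s \<circ> sharp w) w))
  \<and> (\<forall>(P :: ('n,'k) vec \<Rightarrow> ('n,'k) vec) w (lam :: 'k) (s :: ('n,'k) ten2).
       quadratic_RB sc pc lam P w \<and> lam \<noteq> 0 \<and> Tmap s = P \<circ> inv (sharp w) \<longrightarrow>
       factorizable sc pc s)"
proof (intro conjI allI impI)
  fix s :: "('n,'k) ten2" and lam :: 'k
  assume H: "anti_pre_Novikov sc pc \<and> factorizable sc pc s \<and> lam \<noteq> 0"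
  define Tr where "Tr = Tmap (tadd s (flip s))"
  define V where "V = inv Tr"
  define w where "w = (\<lambda>x y. - lam * pairing (V x) y)"
  have APNov: "anti_pre_Novikov sc pc" and lam0: "lam \<noteq> 0" using H by auto
  have bsc: "bilinear_op sc" and bpc: "bilinear_op pc" using APNov by (auto simp: anti_pre_Novikov_def)
  have bijTr: "bij Tr" and APN: "APN_YBE sc pc s" and inv: "invariant sc pc (tadd s (flip s))"
    using H by (auto simp: factorizable_def quasi_triangular_def Tr_def)
  have TrV: "Tr (V y) = y" for y using bijTr by (simp add: V_def bij_is_surj surj_f_inv_f)
  have VTr: "V (Tr y) = y" for y using bijTr by (simp add: V_def bij_is_inj)
  have linV: "is_linear V" unfolding V_def Tr_def
    by (rule linear_inv[OF Tmap_linear]) (use bijTr Tr_def in simp)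
  have bw: "bilinear_form w"
    by (simp add: bilinear_form_def w_def lin_rules[OF linV] algebra_simps)
  have wsym: "w x y = w y x" for x y
  proof -
    have "pairing (V x) (Tr (V y)) = pairing (V y) (Tr (V x))"
      using pairing_Tmap_sym[of "V x" s "V y"] pairing_Tmap_sym[of "V y" s "V x"]
      by (simp add: Tr_def add.commute)
    then show ?thesis by (simp add: w_def TrV)
  qed
  have sharpw: "sharp w x = vsmul (-lam) (V x)" for x
    by (simp add: sharp_def w_def vsmul_def fun_eq_iff)
  have Wsurj: "surj (sharp w)"
  proof (rule surjI)
    fix z show "sharp w (Tr (vsmul (-1/lam) z)) = z"
      by (simp add: sharpw VTr vsmul_cancel[OF lam0])
  qed
  define P where "P = Tmap s \<circ> sharp w"
  have linP: "is_linear P" unfolding P_def by (rule linear_comp[OF Tmap_linear sharp_linear[OF bw]])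
  have compat: "w (P x) y + w x (P y) + lam * w x y = 0" for x y
  proof -
    have "w (P x) y + w x (P y) = pairing (sharp w y) (Tr (sharp w x))"
      using pairing_Tmap_sym[of "sharp w y" s "sharp w x"]
      by (simp add: P_def pW_gen[OF bw] wsym[of "Tmap s (sharp w x)"] Tr_def)
    also have "\<dots> = - lam * w y x"
    proof -
      have "Tr (sharp w x) = vsmul (-lam) x" unfolding sharpw Tr_def using TrV[of x] by (simp add: Tr_def)
      then show ?thesis by (simp add: pW_gen[OF bw] bf_rules[OF bw])
    qed
    finally show ?thesis by (simp add: wsym[of y])
  qed
  have TsW: "Tmap s (sharp w x) = P x" for x by (simp add: P_def)
  interpret S: setting sc pc w P s lam
    by (rule setting.intro[OF bsc bpc bw wsym Wsurj linP TsW compat lam0])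
  have B: S.condB and A: S.condA using S.inv_to[OF inv] by auto
  have Phi0: "Phi sc pc s z e t = 0" for z e t
    by (rule tri_ext[where F = "Phi sc pc s"]) (use Phi_lin[OF bsc bpc] APN_coef[OF bsc bpc] APN in auto)
  have Dc0: "S.Dc y z = vzero" for y z
    by (rule S.nondeg) (use S.G_eq[OF A B] Phi0 in metis)
  have Dpc0: "S.Dpc a b = vzero" for a b
    by (rule S.nondeg) (simp add: wsym[of _ "S.Dpc a b"] S.Dpc_eq[OF A] Dc0 bf_zero[OF bw])
  have Dsc0: "S.Dsc a b = vzero" for a b
    using S.Dc_split[of a b] Dc0[of a b] Dpc0[of a b] by (simp add: vadd_zero)
  have RB: "RB_operator sc pc lam P" using S.RB_iff Dpc0 Dsc0 by blast
  have nd: "\<forall>x. (\<forall>y. w x y = 0) \<longrightarrow> x = vzero"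
    using S.nondeg wsym by metis
  have "quadratic_RB sc pc lam P w"
    unfolding quadratic_RB_def using APNov RB bw wsym nd A B compat by blast
  then show "let w = (\<lambda>x y. - lam * pairing (inv (Tmap (tadd s (flip s))) x) y)
        in quadratic_RB sc pc lam (Tmap s \<circ> sharp w) w"
    by (simp add: Let_def P_def w_def V_def Tr_def)
next
  fix P :: "('n,'k) vec \<Rightarrow> ('n,'k) vec" and w and lam :: 'k and s :: "('n,'k) ten2"
  assume H: "quadratic_RB sc pc lam P w \<and> lam \<noteq> 0 \<and> Tmap s = P \<circ> inv (sharp w)"
  have APNov: "anti_pre_Novikov sc pc" and RB: "RB_operator sc pc lam P" and bw: "bilinear_form w"
    and wsym: "\<And>x y. w x y = w y x" and nd: "\<And>x. (\<forall>y. w x y = 0) \<Longrightarrow> x = vzero"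
    and A: "\<forall>x y z. w (pc x y) z = - w x (circ sc pc z y)"
    and B: "\<forall>x y z. w (sc x y) z = w (vadd (circ sc pc x z) (circ sc pc z x)) y"
    and compat: "\<And>x y. w (P x) y + w x (P y) + lam * w x y = 0"
    and lam0: "lam \<noteq> 0" and Ts: "Tmap s = P \<circ> inv (sharp w)"
    using H unfolding quadratic_RB_def by blast+
  have bsc: "bilinear_op sc" and bpc: "bilinear_op pc" using APNov by (auto simp: anti_pre_Novikov_def)
  have linP: "is_linear P" using RB by (simp add: RB_operator_def)
  have injW: "inj (sharp w)"
  proof (rule injI)
    fix x y assume "sharp w x = sharp w y"
    then have "w x v = w y v" for v using pW_gen[OF bw, of x v] pW_gen[OF bw, of y v] by simp
    then have "w (vsub x y) v = 0" for v by (simp add: vsub_alt bf_rules[OF bw])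
    then have "vsub x y = vzero" using nd by blast
    then show "x = y" by (rule vsub_zero)
  qed
  have Wsurj: "surj (sharp w)" by (rule inj_surj[OF sharp_linear[OF bw] injW])
  have TsW: "Tmap s (sharp w x) = P x" for x by (simp add: Ts inv_f_f[OF injW])
  interpret S: setting sc pc w P s lam
    by (rule setting.intro[OF bsc bpc bw wsym Wsurj linP TsW compat lam0])
  have inv: "invariant sc pc (tadd s (flip s))" using S.inv_from A B by blast
  have Dpc0: "S.Dpc a b = vzero" and Dsc0: "S.Dsc a b = vzero" for a b using S.RB_iff RB by blast+
  have Dc0: "S.Dc y z = vzero" for y z using S.Dc_split Dpc0 Dsc0 by (simp add: vadd_zero)
  have APN: "APN_YBE sc pc s"
    unfolding APN_coef[OF bsc bpc]
  proof (intro allI)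
    fix a b c
    obtain x where x: "sharp w x = basis a" using S.preim by blast
    obtain y where y: "sharp w y = basis b" using S.preim by blast
    obtain z where z: "sharp w z = basis c" using S.preim by blast
    show "Phi sc pc s (basis a) (basis b) (basis c) = 0"
      using S.G_eq[OF A B, of x y z] x y z Dc0 bf_zero[OF bw] by simp
  qed
  have bijTr: "bij (Tmap (tadd s (flip s)))"
  proof (rule bijI)
    show "inj (Tmap (tadd s (flip s)))"
    proof (rule injI)
      fix z1 z2 assume eq: "Tmap (tadd s (flip s)) z1 = Tmap (tadd s (flip s)) z2"
      obtain x1 where x1: "z1 = sharp w x1" using Wsurj by (metis surjD)
      obtain x2 where x2: "z2 = sharp w x2" using Wsurj by (metis surjD)
      from eq have "vsmul (-lam) x1 = vsmul (-lam) x2" by (simp add: x1 x2 S.TrW)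
      then have "x1 = x2" by (rule vsmul_inj[rotated]) (simp add: lam0)
      then show "z1 = z2" by (simp add: x1 x2)
    qed
  next
    show "surj (Tmap (tadd s (flip s)))"
    proof (rule surjI)
      fix z show "Tmap (tadd s (flip s)) (sharp w (vsmul (-1/lam) z)) = z"
        by (simp add: S.TrW vsmul_cancel[OF lam0])
    qed
  qed
  show "factorizable sc pc s"
    unfolding factorizable_def quasi_triangular_def using APN inv bijTr by blast
qed

end
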